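(* Fix $0<q<1$ and $0<p<2$. As $\eta\to0$, $$\sup_{G\in\mathcal G_p(\eta)}\tilde B^2(T_q,G)=\Big(\eta^p\log^{2-p}\log\frac1\eta\Big)(1+o(1)).$$
   Context: $E(t)=1-e^{-t}$, $\bar E=1-E$, $\bar G=1-G$. For a probability distribution $F$ on $[1,\infty)$, $(E\#F)(t)=\int E(t/\mu)\,dF(\mu)$ (one-to-one in $F$). $\mathcal G_p(\eta)=\{E\#F:\int\log^p(\mu)\,dF(\mu)\le\eta^p\}$. FDR functional $T_q(G)=\inf\{t:\bar G(t)\ge\frac1q\bar E(t)\}$. Bias proxy: for $G=E\#F$, $\tilde B^2(T_q,G)=\int\log^2(\mu)\big(1-e^{-T_q(G)/\mu}\big)\,dF(\mu)$. *)

theory Defs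
  imports "HOL-Probability.Probability"
begin

definition Ecdf :: "real \<Rightarrow> real" where
  "Ecdf t = 1 - exp (- t)"

definition mixing_dists :: "real measure set" where
  "mixing_dists = {F. prob_space F \<and> sets F = sets borel \<and> (AE mu in F. 1 \<le> mu)}"

definition Emix :: "real measure \<Rightarrow> real \<Rightarrow> real" where
  "Emix F t = (\<integral>mu. Ecdf (t / mu) \<partial>F)"

text \<open>The class G_p(eta), parametrised by the (unique) mixing distribution F.\<close>
definition Gclass :: "real \<Rightarrow> real \<Rightarrow> real measure set" where
  "Gclass p eta = {F \<in> mixing_dists.
      (\<integral>\<^sup>+ mu. ennreal (ln mu powr p) \<partial>F) \<le> ennreal (eta powr p)}"

definition Tq :: "real \<Rightarrow> (real \<Rightarrow> real) \<Rightarrow> real" where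
  "Tq q G = Inf {t. 1 - G t \<ge> (1 / q) * (1 - Ecdf t)}"

definition Bt2 :: "real \<Rightarrow> real measure \<Rightarrow> real" where
  "Bt2 q F = (\<integral>mu. (ln mu)\<^sup>2 * (1 - exp (- Tq q (Emix F) / mu)) \<partial>F)"

end

theory Submission
  imports Defs "HOL-Real_Asymp.Real_Asymp"
begin


lemma mono_aux:
  fixes a x y :: real
  assumes a: "0 < a" and x: "exp a \<le> x" and xy: "x \<le> y"
  shows "(ln y) powr a / y \<le> (ln x) powr a / x"
proof -
  have x0: "0 < x" using x by (smt (verit) exp_gt_zero)
  have y0: "0 < y" using x0 xy by simp
  define u where "u = x powr (1/a)"
  define v where "v = y powr (1/a)"
  have "exp 1 = (exp a) powr (1/a)" using a by (simp add: powr_def)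
  also have "\<dots> \<le> u" unfolding u_def using x a by (intro powr_mono2) auto
  finally have u1: "exp 1 \<le> u" .
  have uv: "u \<le> v" unfolding u_def v_def using xy x0 a by (intro powr_mono2) auto
  have lnu: "ln u = ln x / a" unfolding u_def using x0 by (simp add: ln_powr)
  have lnv: "ln v = ln y / a" unfolding v_def using y0 by (simp add: ln_powr)
  have "ln v / v \<le> ln u / u" by (rule ln_x_over_x_mono[OF u1 uv])
  hence "a * (ln v / v) \<le> a * (ln u / u)" using a by (intro mult_left_mono) auto
  moreover have "ln y / v = a * (ln v / v)" "ln x / u = a * (ln u / u)" using a lnu lnv by auto
  ultimately have "ln y / v \<le> ln x / u" by (metis (no_types))
  moreover have "0 \<le> ln y / v" unfolding v_def using y0 xy x a
    by (smt (verit) divide_nonneg_pos exp_gt_zero ln_ge_zero one_le_exp_iff powr_gt_zero)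
  ultimately have "(ln y / v) powr a \<le> (ln x / u) powr a" using a by (intro powr_mono2) auto
  moreover have "(ln y / v) powr a = (ln y) powr a / y"
    unfolding v_def using y0 a by (simp add: powr_divide powr_powr)
  moreover have "(ln x / u) powr a = (ln x) powr a / x"
    unfolding u_def using x0 a xy x y0 
    by (subst powr_divide) (auto simp: powr_powr intro!: ln_ge_zero  order.trans[OF _ x] )
  ultimately show ?thesis by simp
qed

lemma one_minus_exp_le: "1 - exp (- (x::real)) \<le> x"
  using exp_ge_add_one_self[of "-x"] by simp

lemma sq_split:
  fixes l p :: real
  assumes "0 \<le> l" 
  shows "l^2 = l powr p * l powr (2 - p)"
proof (cases "l = 0")
  case True then show ?thesis by simp
next
  case False
  then have "l powr p * l powr (2 - p) = l powr 2" using assms by (simp add: powr_add[symmetric])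
  also have "\<dots> = l^2" using False assms by (simp add: powr_numeral)
  finally show ?thesis by simp
qed

lemma pointwise_bound:
  fixes mu M T p :: real
  assumes mu: "1 \<le> mu" and M: "exp 2 \<le> M" and p: "0 < p" "p < 2"
  shows "(ln mu)^2 * (1 - exp (- T / mu)) \<le> (ln M) powr (2 - p) * (ln mu powr p)
           + (if M < T then (ln T)^2 else 0) * indicator {M<..} mu"
proof -
  have M1: "1 < M" using M by (smt (verit) exp_gt_one zero_less_numeral)
  have l0: "0 \<le> ln mu" using mu by simp
  have lnM0: "0 \<le> ln M" using M1 by simp
  have Kp: "0 \<le> (ln M) powr (2 - p) * (ln mu powr p)" by simp
  have Dp: "0 \<le> (if M < T then (ln T)^2 else 0) * indicator {M<..} mu" by (simp add: indicator_def)
  show ?thesis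
  proof (cases "T \<le> 0")
    case True
    then have "1 - exp (- T / mu) \<le> 0" using mu by (simp add: divide_nonpos_pos)
    then have "(ln mu)^2 * (1 - exp (- T / mu)) \<le> 0" by (simp add: mult_nonneg_nonpos)
    then show ?thesis using Kp Dp by linarith
  next
    case False
    then have T0: "0 < T" by simp
    have f1: "1 - exp (- T / mu) \<le> 1" by simp
    have fT: "1 - exp (- T / mu) \<le> T / mu" using one_minus_exp_le[of "T/mu"] by simp
    have sq0: "0 \<le> (ln mu)^2" by simp
    have split: "(ln mu)^2 = ln mu powr p * ln mu powr (2 - p)" by (rule sq_split[OF l0])
    show ?thesis
    proof (cases "mu \<le> M")
      case True
      have "(ln mu)^2 * (1 - exp (- T / mu)) \<le> (ln mu)^2" using f1 sq0 by (simp add: mult_left_le)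
      also have "\<dots> = ln mu powr p * ln mu powr (2 - p)" by (rule split)
      also have "\<dots> \<le> ln mu powr p * ln M powr (2 - p)"
        using True mu p l0 by (intro mult_left_mono powr_mono2) auto
      finally have "(ln mu)^2 * (1 - exp (- T / mu)) \<le> (ln M) powr (2 - p) * (ln mu powr p)"
        by (simp add: mult.commute)
      then show ?thesis using Dp by linarith
    next
      case muM: False
      show ?thesis
      proof (cases "T \<le> M")
        case True
        have "(ln mu)^2 * (1 - exp (- T / mu)) \<le> (ln mu)^2 * (T / mu)" using fT sq0 by (rule mult_left_mono)
        also have "\<dots> \<le> (ln mu)^2 * (M / mu)" using True sq0 mu by (intro mult_left_mono divide_right_mono) auto
        also have "\<dots> = ln mu powr p * (ln mu powr (2 - p) / mu) * M" using split by simp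
        also have "\<dots> \<le> ln mu powr p * (ln M powr (2 - p) / M) * M"
        proof -
          have "exp (2 - p) \<le> M" using M p by (smt (verit) exp_le_cancel_iff)
          then have "ln mu powr (2 - p) / mu \<le> ln M powr (2 - p) / M"
            using mono_aux[of "2 - p" M mu] p muM by simp
          then show ?thesis using M1 by (intro mult_right_mono mult_left_mono) auto
        qed
        also have "\<dots> = (ln M) powr (2 - p) * (ln mu powr p)" using M1 by simp
        finally show ?thesis using Dp by linarith
      next
        case TM: False
        have "(ln mu)^2 * (1 - exp (- T / mu)) \<le> (ln T)^2"
        proof (cases "mu \<le> T")
          case True
          have "(ln mu)^2 * (1 - exp (- T / mu)) \<le> (ln mu)^2" using f1 sq0 by (simp add: mult_left_le)
          also have "\<dots> \<le> (ln T)^2" using True l0 mu by (intro power_mono) auto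
          finally show ?thesis .
        next
          case False
          have "(ln mu)^2 * (1 - exp (- T / mu)) \<le> (ln mu)^2 * (T / mu)" using fT sq0 by (rule mult_left_mono)
          also have "\<dots> = (ln mu powr 2 / mu) * T" using mu by (cases "mu = 1") (auto simp: powr_numeral)
          also have "\<dots> \<le> (ln T powr 2 / T) * T"
            using mono_aux[of 2 T mu] False TM M T0 by (intro mult_right_mono) auto
          also have "\<dots> = (ln T)^2" using T0 TM M1 by (simp add: powr_numeral)
          finally show ?thesis .
        qed
        moreover have "(if M < T then (ln T)^2 else 0) * indicator {M<..} mu = (ln T)^2"
          using TM muM by (simp add: indicator_def)
        ultimately show ?thesis using Kp by linarith
      qed
    qed
  qed
qed

lemma mix_basic:
  assumes "F \<in> mixing_dists"
  shows "prob_space F" "sets F = sets borel" "AE mu in F. 1 \<le> mu" "space F = UNIV"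
    "\<And>f. f \<in> borel_measurable borel \<Longrightarrow> f \<in> borel_measurable F"
proof -
  show P: "prob_space F" "sets F = sets borel" "AE mu in F. 1 \<le> mu"
    using assms by (auto simp: mixing_dists_def)
  show "space F = UNIV" using sets_eq_imp_space_eq[OF P(2)] by simp
  show "\<And>f. f \<in> borel_measurable borel \<Longrightarrow> f \<in> borel_measurable F"
    by (subst measurable_cong_sets[OF P(2) refl]) simp
qed

lemma exp_integrable:
  assumes "F \<in> mixing_dists"
  shows "integrable F (\<lambda>mu. exp (- (t / mu)))"
proof -
  note B = mix_basic[OF assms]
  interpret prob_space F by (rule B(1))
  show ?thesis
  proof (rule integrable_const_bound[where B = "exp \<bar>t\<bar>"])
    show "AE mu in F. norm (exp (- (t / mu))) \<le> exp \<bar>t\<bar>"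
      using B(3)
    proof (rule AE_mp, intro AE_I2 impI)
      fix mu :: real assume "1 \<le> mu"
      then have "\<bar>t\<bar> * 1 \<le> \<bar>t\<bar> * mu" by (intro mult_left_mono) auto
      then have "\<bar>t / mu\<bar> \<le> \<bar>t\<bar>" using \<open>1 \<le> mu\<close> by (simp add: abs_divide divide_le_eq)
      then have "- (t / mu) \<le> \<bar>t\<bar>" by linarith
      then show "norm (exp (- (t / mu))) \<le> exp \<bar>t\<bar>" by simp
    qed
    show "(\<lambda>mu. exp (- (t / mu))) \<in> borel_measurable F" by (intro B(5)) measurable
  qed
qed

lemma one_minus_Emix:
  assumes "F \<in> mixing_dists"
  shows "1 - Emix F t = (\<integral>mu. exp (- (t / mu)) \<partial>F)"
proof -
  note B = mix_basic[OF assms]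
  interpret prob_space F by (rule B(1))
  have "Emix F t = (\<integral>mu. 1 - exp (- (t / mu)) \<partial>F)" by (simp add: Emix_def Ecdf_def)
  also have "\<dots> = (\<integral>mu. 1 \<partial>F) - (\<integral>mu. exp (- (t / mu)) \<partial>F)"
    by (rule Bochner_Integration.integral_diff[OF integrable_const exp_integrable[OF assms]])
  also have "\<dots> = 1 - (\<integral>mu. exp (- (t / mu)) \<partial>F)" by (simp add: prob_space)
  finally show ?thesis by simp
qed

lemma Tq_below:
  assumes F: "F \<in> mixing_dists" and q: "0 < q" "q < 1"
    and t: "t < Tq q (Emix F)"
  shows "(\<integral>mu. exp (- (t / mu)) \<partial>F) < exp (- t) / q"
proof -
  note B = mix_basic[OF F]
  interpret prob_space F by (rule B(1))
  define S where "S = {t. 1 - Emix F t \<ge> (1 / q) * (1 - Ecdf t)}"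
  have T: "Tq q (Emix F) = Inf S" by (simp add: Tq_def S_def)
  have mem: "s \<in> S \<longleftrightarrow> exp (- s) / q \<le> (\<integral>mu. exp (- (s / mu)) \<partial>F)" for s
    by (simp add: S_def one_minus_Emix[OF F] Ecdf_def)
  have bdd: "bdd_below S"
  proof (rule bdd_belowI[where m = 0])
    fix s assume sS: "s \<in> S"
    show "0 \<le> s"
    proof (rule ccontr)
      assume "\<not> 0 \<le> s"
      then have s0: "s < 0" by simp
      have "(\<integral>mu. exp (- (s / mu)) \<partial>F) \<le> (\<integral>mu. exp (- s) \<partial>F)"
      proof (rule integral_mono_AE)
        show "integrable F (\<lambda>mu. exp (- (s / mu)))" by (rule exp_integrable[OF F])
        show "integrable F (\<lambda>mu. exp (- s))" by simp
        show "AE mu in F. exp (- (s / mu)) \<le> exp (- s)"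
          using B(3)
        proof (rule AE_mp, intro AE_I2 impI)
          fix mu :: real assume mu: "1 \<le> mu"
          have "s \<le> s / mu" using s0 mu by (simp add: le_divide_eq mult_le_cancel_left1)
          then show "exp (- (s / mu)) \<le> exp (- s)" by simp
        qed
      qed
      also have "\<dots> = exp (- s)" by (simp add: prob_space)
      also have "\<dots> < exp (- s) / q" using q by (simp add: less_divide_eq)
      finally show False using sS mem by simp
    qed
  qed
  have "t \<notin> S"
  proof
    assume "t \<in> S"
    then have "Inf S \<le> t" using bdd by (rule cInf_lower)
    then show False using t T by simp
  qed
  then show ?thesis using mem by simp
qed

lemma upper_bound:
  fixes q p eta M :: real
  assumes q: "0 < q" "q < 1" and p: "0 < p" "p < 2" and eta: "0 < eta"
    and M: "exp 2 \<le> M" and F: "F \<in> Gclass p eta"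
  shows "Bt2 q F \<le> (ln M) powr (2 - p) * eta powr p + 64 * exp (1/2) * exp (- M / 4) / q"
proof -
  have Fm: "F \<in> mixing_dists" and nn: "(\<integral>\<^sup>+ mu. ennreal (ln mu powr p) \<partial>F) \<le> ennreal (eta powr p)"
    using F by (auto simp: Gclass_def)
  note B = mix_basic[OF Fm]
  interpret prob_space F by (rule B(1))
  have M1: "2 < M" using M exp_ge_add_one_self[of 2] by linarith
  define T where "T = Tq q (Emix F)"
  define K where "K = (ln M) powr (2 - p)"
  define D where "D = (if M < T then (ln T)^2 else 0)"
  define P where "P = measure F {M<..}"
  have K0: "0 \<le> K" by (simp add: K_def)
  have D0: "0 \<le> D" by (simp add: D_def)
  have P0: "0 \<le> P" by (simp add: P_def)
  have setM: "{M<..} \<in> sets F" using B(2) by simp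
  have measp: "(\<lambda>mu. ln mu powr p) \<in> borel_measurable F" by (intro B(5)) measurable
  have intind: "integrable F (indicator {M<..} :: real \<Rightarrow> real)"
    using setM by (intro integrable_real_indicator) (auto simp: emeasure_eq_measure)
  have intp: "integrable F (\<lambda>mu. ln mu powr p)"
  proof (rule integrableI_nonneg[OF measp])
    show "AE x in F. 0 \<le> ln x powr p" by simp
    show "(\<integral>\<^sup>+ x. ennreal (ln x powr p) \<partial>F) < \<infinity>"
      using nn by (simp add: le_less_trans)
  qed
  have intlp: "(\<integral>mu. ln mu powr p \<partial>F) \<le> eta powr p"
    using integral_eq_nn_integral[OF measp] nn by (auto intro!: enn2real_leI)
  have intR: "integrable F (\<lambda>mu. K * ln mu powr p + D * indicator {M<..} mu)"
    using intp intind by (intro Bochner_Integration.integrable_add integrable_mult_right) auto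
  have intReq: "(\<integral>mu. K * ln mu powr p + D * indicator {M<..} mu \<partial>F) = K * (\<integral>mu. ln mu powr p \<partial>F) + D * P"
    using intp intind setM B(4) by (subst Bochner_Integration.integral_add) (auto simp: P_def)
  have step1: "Bt2 q F \<le> K * (\<integral>mu. ln mu powr p \<partial>F) + D * P"
  proof (cases "integrable F (\<lambda>mu. (ln mu)\<^sup>2 * (1 - exp (- T / mu)))")
    case True
    have "Bt2 q F \<le> (\<integral>mu. K * ln mu powr p + D * indicator {M<..} mu \<partial>F)"
      unfolding Bt2_def T_def[symmetric]
    proof (rule integral_mono_AE[OF True intR])
      show "AE mu in F. (ln mu)\<^sup>2 * (1 - exp (- T / mu)) \<le> K * ln mu powr p + D * indicator {M<..} mu"
        using B(3)
      proof (rule AE_mp, intro AE_I2 impI)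
        fix mu :: real assume "1 \<le> mu"
        then show "(ln mu)\<^sup>2 * (1 - exp (- T / mu)) \<le> K * ln mu powr p + D * indicator {M<..} mu"
          using pointwise_bound[of mu M p T] M p by (simp add: K_def D_def)
      qed
    qed
    then show ?thesis using intReq by simp
  next
    case False
    then have "Bt2 q F = 0" unfolding Bt2_def T_def[symmetric] by (rule not_integrable_integral_eq)
    moreover have "0 \<le> (\<integral>mu. K * ln mu powr p + D * indicator {M<..} mu \<partial>F)"
      using K0 D0 by (intro integral_nonneg_AE) (auto simp: indicator_def)
    ultimately show ?thesis using intReq by simp
  qed
  have step2: "K * (\<integral>mu. ln mu powr p \<partial>F) \<le> K * eta powr p"
    using intlp K0 by (rule mult_left_mono)
  have step3: "D * P \<le> 64 * exp (1/2) * exp (- M / 4) / q"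
  proof (cases "M < T")
    case False
    then show ?thesis using q by (simp add: D_def)
  next
    case True
    define t where "t = T - 1"
    have t0: "0 \<le> t" using True M1 by (simp add: t_def)
    have T0: "0 < T" using True M1 by simp
    have below: "(\<integral>mu. exp (- (t / mu)) \<partial>F) < exp (- t) / q"
      using Tq_below[OF Fm q, of t] by (simp add: t_def T_def)
    have "(\<integral>mu. exp (- (t / M)) * indicator {M<..} mu \<partial>F) \<le> (\<integral>mu. exp (- (t / mu)) \<partial>F)"
    proof (rule integral_mono_AE)
      show "integrable F (\<lambda>mu. exp (- (t / M)) * indicator {M<..} mu)"
        using intind by (intro integrable_mult_right) auto
      show "integrable F (\<lambda>mu. exp (- (t / mu)))" by (rule exp_integrable[OF Fm])
      show "AE mu in F. exp (- (t / M)) * indicator {M<..} mu \<le> exp (- (t / mu))"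
      proof (intro AE_I2)
        fix mu :: real
        show "exp (- (t / M)) * indicator {M<..} mu \<le> exp (- (t / mu))"
        proof (cases "M < mu")
          case True
          then have "t / mu \<le> t / M" using t0 M1 by (intro divide_left_mono) auto
          then show ?thesis using True by (simp add: indicator_def)
        qed (simp add: indicator_def)
      qed
    qed
    moreover have "(\<integral>mu. exp (- (t / M)) * indicator {M<..} mu \<partial>F) = exp (- (t / M)) * P"
      using B(4) by (simp add: P_def)
    ultimately have "exp (- (t / M)) * P < exp (- t) / q" using below by simp
    then have "P < exp (- t) / q / exp (- (t / M))" by (metis exp_gt_zero mult.commute pos_less_divide_eq)
    also have "\<dots> = exp (- t + t / M) / q" by (simp add: exp_diff exp_minus field_simps)
    also have "\<dots> \<le> exp (- t / 2) / q"
    proof -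
      have "t / M \<le> t / 2" using t0 M1 by (intro divide_left_mono) auto
      then have "- t + t / M \<le> - t / 2" by linarith
      then show ?thesis using q by (intro divide_right_mono) auto
    qed
    finally have Pb: "P \<le> exp (- t / 2) / q" by simp
    have lnT: "0 \<le> ln T" "ln T \<le> T" using T0 True M1 ln_le_minus_one[OF T0] by auto
    have "T / 8 \<le> exp (T / 8)" using exp_ge_add_one_self[of "T/8"] by linarith
    then have "(T / 8)^2 \<le> (exp (T / 8))^2" using T0 by (intro power_mono) auto
    then have "T^2 \<le> 64 * exp (T / 4)" by (simp add: power2_eq_square exp_add[symmetric] field_simps)
    moreover have "(ln T)^2 \<le> T^2" using lnT by (intro power_mono) auto
    ultimately have DT: "D \<le> 64 * exp (T / 4)" using True by (simp add: D_def)
    have "D * P \<le> 64 * exp (T / 4) * (exp (- t / 2) / q)"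
      using DT Pb D0 P0 by (intro mult_mono) auto
    also have "\<dots> = 64 * exp (1/2) * exp (- T / 4) / q"
      by (simp add: t_def exp_add[symmetric] field_simps)
    also have "\<dots> \<le> 64 * exp (1/2) * exp (- M / 4) / q"
      using True q by (intro divide_right_mono mult_left_mono) auto
    finally show ?thesis .
  qed
  show ?thesis using step1 step2 step3 by (simp add: K_def)
qed

definition twopt :: "real \<Rightarrow> real \<Rightarrow> real measure" where
  "twopt eps mu = distr (measure_pmf (bernoulli_pmf eps)) borel (\<lambda>b. if b then mu else 1)"

lemma twopt_integral:
  assumes "0 \<le> eps" "eps \<le> 1" and f: "f \<in> borel_measurable borel"
  shows "(\<integral>x. f x \<partial>twopt eps mu) = f mu * eps + f 1 * (1 - eps)"
  unfolding twopt_def using assms by (subst integral_distr) auto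

lemma twopt_nn_integral:
  assumes "0 \<le> eps" "eps \<le> 1" and f: "f \<in> borel_measurable borel"
  shows "(\<integral>\<^sup>+x. f x \<partial>twopt eps mu) = f mu * eps + f 1 * (1 - eps)"
  unfolding twopt_def using assms by (subst nn_integral_distr) auto

lemma twopt_mix:
  assumes "0 \<le> eps" "eps \<le> 1" "1 \<le> mu"
  shows "twopt eps mu \<in> mixing_dists"
proof -
  have "prob_space (twopt eps mu)" unfolding twopt_def
    by (intro prob_space.prob_space_distr) (auto simp: measure_pmf.prob_space_axioms)
  moreover have "sets (twopt eps mu) = sets borel" by (simp add: twopt_def)
  moreover have "AE x in twopt eps mu. 1 \<le> x" unfolding twopt_def
    using assms by (subst AE_distr_iff) (auto simp: AE_measure_pmf_iff)
  ultimately show ?thesis by (simp add: mixing_dists_def)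
qed

lemma lower_bound:
  fixes q p eta eps mu :: real
  assumes q: "0 < q" "q < 1" and p: "0 < p" "p < 2" and eta: "0 < eta"
    and mu: "1 < mu" and eps: "eps = eta powr p / (ln mu) powr p" "0 < eps" "eps < 1"
  shows "twopt eps mu \<in> Gclass p eta"
    "eta powr p * (ln mu) powr (2 - p) * (1 - exp (- ln ((1 / q - 1) / eps) / mu)) \<le> Bt2 q (twopt eps mu)"
proof -
  define F where "F = twopt eps mu"
  have Fm: "F \<in> mixing_dists" unfolding F_def using twopt_mix[of eps mu] eps mu by simp
  have lmu: "0 < ln mu" using mu by simp
  have "(\<integral>\<^sup>+x. ennreal (ln x powr p) \<partial>F) = ennreal (ln mu powr p) * eps + ennreal (ln 1 powr p) * (1 - eps)"
    unfolding F_def using eps(2,3) by (intro twopt_nn_integral) auto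
  also have "\<dots> = ennreal (ln mu powr p * eps)" using eps(2) by (simp add: ennreal_mult)
  also have "ln mu powr p * eps = eta powr p" using eps lmu by simp
  finally show "twopt eps mu \<in> Gclass p eta" using Fm by (simp add: Gclass_def F_def)
  have Eb: "1 - Emix F t = eps * exp (- (t / mu)) + (1 - eps) * exp (- t)" for t
  proof -
    have "1 - Emix F t = (\<integral>m. exp (- (t / m)) \<partial>F)" by (rule one_minus_Emix[OF Fm])
    also have "\<dots> = eps * exp (- (t / mu)) + (1 - eps) * exp (- t)"
      unfolding F_def using eps(2,3) by (subst twopt_integral) auto
    finally show ?thesis .
  qed
  define S where "S = {t. 1 - Emix F t \<ge> (1 / q) * (1 - Ecdf t)}"
  have mem: "t \<in> S \<longleftrightarrow> exp (- t) / q \<le> eps * exp (- (t / mu)) + (1 - eps) * exp (- t)" for t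
    by (simp add: S_def Eb Ecdf_def)
  define T0 where "T0 = ln ((1 / q - 1) / eps)"
  have qq: "0 < 1 / q - 1" using q by (simp add: field_simps)
  have ne: "S \<noteq> {}"
  proof -
    define c where "c = ln (1 / (q * eps))"
    define t where "t = c * mu / (mu - 1)"
    have m1: "mu - 1 \<noteq> 0" "mu \<noteq> 0" using mu by auto
    have "t - t / mu = t * (mu - 1) / mu" using m1 by (simp add: field_simps)
    also have "\<dots> = c" using m1 by (simp add: t_def)
    finally have "t - t / mu = c" .
    then have "exp (- (t / mu)) = exp c * exp (- t)" by (simp flip: exp_add)
    also have "exp c = 1 / (q * eps)" unfolding c_def using q eps(2,3) by simp
    finally have "eps * exp (- (t / mu)) = exp (- t) / q" using eps(2,3) by simp
    then have "t \<in> S" using mem eps(2,3) by simp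
    then show ?thesis by auto
  qed
  have lb: "T0 \<le> t" if "t \<in> S" for t
  proof -
    have tS: "exp (- t) / q \<le> eps * exp (- (t / mu)) + (1 - eps) * exp (- t)" using that mem by simp
    have t0: "0 \<le> t"
    proof (rule ccontr)
      assume "\<not> 0 \<le> t"
      then have "t \<le> t / mu" using mu by (simp add: le_divide_eq mult_le_cancel_left1)
      then have "exp (- (t / mu)) \<le> exp (- t)" by simp
      then have "eps * exp (- (t / mu)) \<le> eps * exp (- t)"
        using eps(2) by (intro mult_left_mono) auto
      then have "eps * exp (- (t / mu)) + (1 - eps) * exp (- t) \<le> exp (- t)"
        by (simp add: algebra_simps)
      moreover have "exp (- t) < exp (- t) / q" using q by (simp add: less_divide_eq)
      ultimately show False using tS by simp
    qed
    have "exp (- (t / mu)) \<le> 1" using t0 mu by simp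
    then have "exp (- t) / q \<le> eps + (1 - eps) * exp (- t)"
      using tS eps(2,3) mult_left_le[of "exp (- (t / mu))" eps] by linarith
    then have "exp (- t) * (1 / q - 1) \<le> eps - eps * exp (- t)" by (simp add: field_simps)
    also have "\<dots> \<le> eps" using eps(2,3) by simp
    finally have "(1 / q - 1) / eps \<le> exp t" using eps(2,3) qq by (simp add: exp_minus field_simps)
    then have "ln ((1 / q - 1) / eps) \<le> ln (exp t)" using qq eps(2,3) by (subst ln_le_cancel_iff) auto
    then show ?thesis unfolding T0_def by simp
  qed
  define T where "T = Tq q (Emix F)"
  have TT: "T0 \<le> T" unfolding T_def Tq_def S_def[symmetric] by (rule cInf_greatest[OF ne lb])
  have "Bt2 q F = (ln mu)^2 * (1 - exp (- T / mu)) * eps + (ln 1)^2 * (1 - exp (- T / 1)) * (1 - eps)"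
    unfolding Bt2_def T_def[symmetric] unfolding F_def using eps(2,3) by (subst twopt_integral) auto
  also have "\<dots> = eps * (ln mu)^2 * (1 - exp (- T / mu))" by simp
  also have "eps * (ln mu)^2 = eta powr p * (ln mu) powr (2 - p)"
    using eps lmu sq_split[of "ln mu" p] by simp
  finally have BF: "Bt2 q F = eta powr p * (ln mu) powr (2 - p) * (1 - exp (- T / mu))" .
  have "1 - exp (- T0 / mu) \<le> 1 - exp (- T / mu)" using TT mu by (simp add: divide_right_mono)
  then show "eta powr p * (ln mu) powr (2 - p) * (1 - exp (- ln ((1 / q - 1) / eps) / mu)) \<le> Bt2 q (twopt eps mu)"
    unfolding BF[unfolded F_def] T0_def[symmetric] by (intro mult_left_mono) auto
qed

lemma ev1: "eventually (\<lambda>x::real. 1 < x / ln x) at_top" by real_asymp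
lemma ev2: "eventually (\<lambda>x::real. 1 \<le> ln (x / ln x)) at_top" by real_asymp
lemma ev3: "eventually (\<lambda>x::real. 1 \<le> ln x) at_top" by real_asymp
lemma lim1: "((\<lambda>x::real. ln (x / ln x) / ln x) \<longlongrightarrow> 1) at_top" by real_asymp
lemma lim2: "((\<lambda>x::real. 1 / ln x) \<longlongrightarrow> 0) at_top" by real_asymp
lemma lim3: "((\<lambda>x::real. exp (- x)) \<longlongrightarrow> 0) at_top" by real_asymp
lemma lim4: "filterlim (\<lambda>eta::real. ln (1 / eta)) at_top (at_right 0)" by real_asymp


lemma upper_ratio:
  fixes p q C :: real
  assumes p: "0 < p" "p < 2" and q: "0 < q"
  shows "((\<lambda>x. ((ln (4 * (p + 1) * x)) powr (2 - p) * exp (- p * x) + C * exp (- (4 * (p + 1) * x) / 4) / q)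
          / (exp (- p * x) * (ln x) powr (2 - p))) \<longlongrightarrow> 1) at_top"
proof -
  define c where "c = ln (4 * (p + 1))"
  have ev: "eventually (\<lambda>x. ((ln (4 * (p + 1) * x)) powr (2 - p) * exp (- p * x) + C * exp (- (4 * (p + 1) * x) / 4) / q)
          / (exp (- p * x) * (ln x) powr (2 - p))
        = (1 + c * (1 / ln x)) powr (2 - p) + (C / q) * (exp (- x) / (ln x) powr (2 - p))) at_top"
    using eventually_conj[OF ev3 eventually_gt_at_top[of 0]]
  proof (rule eventually_mono)
    fix x :: real assume lx': "1 \<le> ln x \<and> 0 < x"
    then have lx: "1 \<le> ln x" and x0: "0 < x" by auto
    have lx0: "0 < ln x" using lx by simp
    have pw: "0 < (ln x) powr (2 - p)" using lx0 by simp
    have l4: "ln (4 * (p + 1) * x) = c + ln x" unfolding c_def using p x0 by (simp add: ln_mult)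
    have c0: "0 \<le> c" unfolding c_def using p by (intro ln_ge_zero) simp
    have l4p: "0 \<le> c + ln x" using c0 lx0 by simp
    have r1: "(ln (4 * (p + 1) * x)) powr (2 - p) / (ln x) powr (2 - p) = (1 + c * (1 / ln x)) powr (2 - p)"
    proof -
      have "(ln (4 * (p + 1) * x)) powr (2 - p) / (ln x) powr (2 - p) = ((c + ln x) / ln x) powr (2 - p)"
        using l4 l4p lx0 by (simp add: powr_divide)
      also have "(c + ln x) / ln x = 1 + c * (1 / ln x)" using lx0 by (simp add: field_simps)
      finally show ?thesis .
    qed
    have r2: "exp (- (4 * (p + 1) * x) / 4) / exp (- p * x) = exp (- x)"
    proof -
      have "- (4 * (p + 1) * x) / 4 = - p * x + (- x)" by (simp add: field_simps)
      then have "exp (- (4 * (p + 1) * x) / 4) = exp (- p * x) * exp (- x)" by (simp only: exp_add)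
      then show ?thesis by simp
    qed
    have "((ln (4 * (p + 1) * x)) powr (2 - p) * exp (- p * x) + C * exp (- (4 * (p + 1) * x) / 4) / q)
          / (exp (- p * x) * (ln x) powr (2 - p))
        = (ln (4 * (p + 1) * x)) powr (2 - p) / (ln x) powr (2 - p)
          + (C / q) * ((exp (- (4 * (p + 1) * x) / 4) / exp (- p * x)) / (ln x) powr (2 - p))"
    proof -
      have e0: "0 < exp (- p * x)" by simp
      have "\<And>A E. (A * exp (- p * x) + C * E / q) / (exp (- p * x) * (ln x) powr (2 - p))
           = A / (ln x) powr (2 - p) + (C / q) * ((E / exp (- p * x)) / (ln x) powr (2 - p))"
        using e0 pw q by (simp add: add_divide_distrib)
      then show ?thesis by blast
    qed
    also have "\<dots> = (1 + c * (1 / ln x)) powr (2 - p) + (C / q) * (exp (- x) / (ln x) powr (2 - p))"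
      using r1 r2 by simp
    finally show "((ln (4 * (p + 1) * x)) powr (2 - p) * exp (- p * x) + C * exp (- (4 * (p + 1) * x) / 4) / q)
          / (exp (- p * x) * (ln x) powr (2 - p))
        = (1 + c * (1 / ln x)) powr (2 - p) + (C / q) * (exp (- x) / (ln x) powr (2 - p))" .
  qed
  have A: "((\<lambda>x. (1 + c * (1 / ln x)) powr (2 - p)) \<longlongrightarrow> 1) at_top"
  proof -
    have "((\<lambda>x. 1 + c * (1 / ln x)) \<longlongrightarrow> 1 + c * 0) at_top"
      by (intro tendsto_intros lim2)
    then have "((\<lambda>x. (1 + c * (1 / ln x)) powr (2 - p)) \<longlongrightarrow> (1 + c * 0) powr (2 - p)) at_top"
      by (intro tendsto_powr) auto
    then show ?thesis by simp
  qed
  have B: "((\<lambda>x. exp (- x) / (ln x) powr (2 - p)) \<longlongrightarrow> 0) at_top"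
  proof (rule tendsto_sandwich[OF _ _ tendsto_const lim3])
    show "eventually (\<lambda>x. 0 \<le> exp (- x) / (ln x) powr (2 - p)) at_top" by simp
    show "eventually (\<lambda>x. exp (- x) / (ln x) powr (2 - p) \<le> exp (- x)) at_top"
      using ev3
    proof (rule eventually_mono)
      fix x :: real assume "1 \<le> ln x"
      then have "1 \<le> (ln x) powr (2 - p)" using p by (intro ge_one_powr_ge_zero) auto
      then show "exp (- x) / (ln x) powr (2 - p) \<le> exp (- x)" by (simp add: divide_le_eq)
    qed
  qed
  have "((\<lambda>x. (1 + c * (1 / ln x)) powr (2 - p) + (C / q) * (exp (- x) / (ln x) powr (2 - p))) \<longlongrightarrow> 1 + (C / q) * 0) at_top"
    by (intro tendsto_intros A B)
  then show ?thesis using tendsto_cong[OF ev] by simp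
qed


lemma lower_ratio:
  fixes p q :: real
  assumes p: "0 < p" "p < 2" and q: "0 < q" "q < 1"
  shows "((\<lambda>x. exp (- p * x) * (ln (x / ln x)) powr (2 - p)
            * (1 - exp (- ln ((1 / q - 1) / (exp (- p * x) / (ln (x / ln x)) powr p)) / (x / ln x)))
          / (exp (- p * x) * (ln x) powr (2 - p))) \<longlongrightarrow> 1) at_top"
proof -
  define a where "a = ln (1 / q - 1)"
  define R where "R = (\<lambda>x::real. 1 - exp (- ln ((1 / q - 1) / (exp (- p * x) / (ln (x / ln x)) powr p)) / (x / ln x)))"
  have qq: "0 < 1 / q - 1" using q by (simp add: field_simps)
  have evs: "eventually (\<lambda>x. (1 \<le> ln x \<and> 0 < x) \<and> 1 \<le> ln (x / ln x) \<and> 1 < x / ln x \<and> - 2 * a / p \<le> x) at_top"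
    by (intro eventually_conj ev3 ev2 ev1 eventually_gt_at_top eventually_ge_at_top)
  have ev: "eventually (\<lambda>x. exp (- p * x) * (ln (x / ln x)) powr (2 - p) * R x
          / (exp (- p * x) * (ln x) powr (2 - p)) = (ln (x / ln x) / ln x) powr (2 - p) * R x) at_top"
    using evs
  proof (rule eventually_mono)
    fix x :: real assume h: "(1 \<le> ln x \<and> 0 < x) \<and> 1 \<le> ln (x / ln x) \<and> 1 < x / ln x \<and> - 2 * a / p \<le> x"
    then have l0: "0 < ln x" "0 < ln (x / ln x)" by linarith+
    then show "exp (- p * x) * (ln (x / ln x)) powr (2 - p) * R x
          / (exp (- p * x) * (ln x) powr (2 - p)) = (ln (x / ln x) / ln x) powr (2 - p) * R x"
      by (simp add: powr_divide)
  qed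
  have lowR: "eventually (\<lambda>x. 1 - x powr (- p / 2) \<le> R x) at_top"
    using evs
  proof (rule eventually_mono)
    fix x :: real assume h: "(1 \<le> ln x \<and> 0 < x) \<and> 1 \<le> ln (x / ln x) \<and> 1 < x / ln x \<and> - 2 * a / p \<le> x"
    then have x0: "0 < x" and lx: "0 < ln x" and lm: "1 \<le> ln (x / ln x)" and xa: "- 2 * a / p \<le> x" by linarith+
    define m where "m = x / ln x"
    have m0: "0 < m" using x0 lx by (simp add: m_def)
    have lm0: "0 < ln m" using lm by (simp add: m_def)
    have e0: "0 < exp (- p * x) / (ln m) powr p" using lm0 by simp
    have "ln ((1 / q - 1) / (exp (- p * x) / (ln m) powr p)) = a - ln (exp (- p * x) / (ln m) powr p)"
      unfolding a_def using qq e0 by (subst ln_div) auto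
    also have "ln (exp (- p * x) / (ln m) powr p) = - p * x - p * ln (ln m)"
      using lm0 by (simp add: ln_div ln_powr)
    finally have T0: "ln ((1 / q - 1) / (exp (- p * x) / (ln m) powr p)) = a + p * x + p * ln (ln m)" by simp
    have "0 \<le> ln (ln m)" using lm by (simp add: m_def)
    then have "0 \<le> p * ln (ln m)" using p by simp
    moreover have "- a \<le> p * x / 2"
    proof -
      have "p * (- 2 * a / p) \<le> p * x" using xa p by (intro mult_left_mono) auto
      then show ?thesis using p by simp
    qed
    ultimately have T1: "p * x / 2 \<le> ln ((1 / q - 1) / (exp (- p * x) / (ln m) powr p))" using T0 by linarith
    have "(p / 2) * ln x = (p * x / 2) / m" using x0 lx by (simp add: m_def field_simps)
    also have "\<dots> \<le> ln ((1 / q - 1) / (exp (- p * x) / (ln m) powr p)) / m"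
      using T1 m0 by (intro divide_right_mono) auto
    finally have "exp (- (ln ((1 / q - 1) / (exp (- p * x) / (ln m) powr p)) / m)) \<le> exp (- (p / 2) * ln x)"
      by simp
    also have "exp (- (p / 2) * ln x) = x powr (- p / 2)" using x0 by (simp add: powr_def)
    finally show "1 - x powr (- p / 2) \<le> R x" by (simp add: R_def m_def)
  qed
  have upR: "eventually (\<lambda>x. R x \<le> 1) at_top" by (simp add: R_def)
  have limR: "(R \<longlongrightarrow> 1) at_top"
  proof (rule tendsto_sandwich[OF lowR upR _ tendsto_const])
    have "((\<lambda>x::real. x powr (- p / 2)) \<longlongrightarrow> 0) at_top"
      using p by (intro tendsto_neg_powr filterlim_ident) auto
    then show "((\<lambda>x. 1 - x powr (- p / 2)) \<longlongrightarrow> 1) at_top"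
      using tendsto_diff[OF tendsto_const, of _ 0 at_top 1] by simp
  qed
  have limA: "((\<lambda>x. (ln (x / ln x) / ln x) powr (2 - p)) \<longlongrightarrow> 1) at_top"
    using tendsto_powr[OF lim1 tendsto_const[of "2 - p"]] by simp
  have "((\<lambda>x. (ln (x / ln x) / ln x) powr (2 - p) * R x) \<longlongrightarrow> 1 * 1) at_top"
    by (intro tendsto_mult limA limR)
  then have "((\<lambda>x. exp (- p * x) * (ln (x / ln x)) powr (2 - p) * R x
          / (exp (- p * x) * (ln x) powr (2 - p))) \<longlongrightarrow> 1) at_top"
    using tendsto_cong[OF ev] by simp
  then show ?thesis by (simp add: R_def)
qed


lemma ev_pos: "eventually (\<lambda>eta::real. 0 < eta) (at_right 0)" by real_asymp

theorem lemma5p4: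
  fixes q p :: real
  assumes "0 < q" "q < 1" "0 < p" "p < 2"
  shows "(\<forall>\<^sub>F eta in at_right 0. bdd_above (Bt2 q ` Gclass p eta))
    \<and> ((\<lambda>eta. Sup (Bt2 q ` Gclass p eta))
         \<sim>[at_right 0] (\<lambda>eta. eta powr p * (ln (ln (1 / eta))) powr (2 - p)))"
proof -
  note q = assms(1,2) and p = assms(3,4)
  define C where "C = 64 * exp (1/2 :: real)"
  define Ux where "Ux = (\<lambda>x::real. (ln (4 * (p + 1) * x)) powr (2 - p) * exp (- p * x) + C * exp (- (4 * (p + 1) * x) / 4) / q)"
  define Lx where "Lx = (\<lambda>x::real. exp (- p * x) * (ln (x / ln x)) powr (2 - p)
            * (1 - exp (- ln ((1 / q - 1) / (exp (- p * x) / (ln (x / ln x)) powr p)) / (x / ln x))))"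
  define gx where "gx = (\<lambda>x::real. exp (- p * x) * (ln x) powr (2 - p))"
  define f where "f = (\<lambda>eta. Sup (Bt2 q ` Gclass p eta))"
  define g where "g = (\<lambda>eta::real. eta powr p * (ln (ln (1 / eta))) powr (2 - p))"
  have X: "filterlim (\<lambda>eta::real. ln (1 / eta)) at_top (at_right 0)" by (rule lim4)
  have limU: "((\<lambda>eta. Ux (ln (1 / eta)) / gx (ln (1 / eta))) \<longlongrightarrow> 1) (at_right 0)"
    using filterlim_compose[OF upper_ratio[OF p q(1), of C] X] by (simp add: Ux_def gx_def)
  have limL: "((\<lambda>eta. Lx (ln (1 / eta)) / gx (ln (1 / eta))) \<longlongrightarrow> 1) (at_right 0)"
    using filterlim_compose[OF lower_ratio[OF p q] X] by (simp add: Lx_def gx_def)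
  define Good where "Good = (\<lambda>x::real. exp 2 \<le> x \<and> 1 \<le> ln x \<and> 1 \<le> ln (x / ln x) \<and> 1 < x / ln x)"
  have evx: "eventually Good at_top"
    unfolding Good_def by (intro eventually_conj ev3 ev2 ev1 eventually_ge_at_top)
  have evE: "eventually (\<lambda>eta. 0 < eta \<and> Good (ln (1 / eta))) (at_right 0)"
    by (intro eventually_conj ev_pos eventually_compose_filterlim[OF evx X])
  have main: "eventually (\<lambda>eta. bdd_above (Bt2 q ` Gclass p eta)
      \<and> Lx (ln (1 / eta)) \<le> f eta \<and> f eta \<le> Ux (ln (1 / eta))
      \<and> g eta = gx (ln (1 / eta)) \<and> 0 < gx (ln (1 / eta))) (at_right 0)"
    using evE
  proof (rule eventually_mono)
    fix eta :: real assume h: "0 < eta \<and> Good (ln (1 / eta))"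
    define x where "x = ln (1 / eta)"
    have e0: "0 < eta" using h by simp
    have G: "exp 2 \<le> x" "1 \<le> ln x" "1 \<le> ln (x / ln x)" "1 < x / ln x" using h by (auto simp: Good_def x_def)
    have x0: "0 < x" using G(1) by (smt (verit) exp_gt_zero)
    have ep: "eta powr p = exp (- p * x)" using e0 by (simp add: powr_def x_def ln_div)
    have geq: "g eta = gx x" by (simp add: g_def gx_def ep x_def)
    have gpos: "0 < gx x" using G(2) by (simp add: gx_def)
    define M where "M = 4 * (p + 1) * x"
    have M: "exp 2 \<le> M"
    proof -
      have "x \<le> M" unfolding M_def using p x0 by (simp add: mult_le_cancel_right1)
      then show ?thesis using G(1) by simp
    qed
    have ub: "Bt2 q F \<le> Ux x" if "F \<in> Gclass p eta" for F
      using upper_bound[OF q p e0 M that] by (simp add: Ux_def M_def ep C_def)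
    have bdd: "bdd_above (Bt2 q ` Gclass p eta)" using ub by (intro bdd_aboveI2) 
    define mu where "mu = x / ln x"
    define eps where "eps = eta powr p / (ln mu) powr p"
    have lm: "1 \<le> ln mu" using G(3) by (simp add: mu_def)
    have eps0: "0 < eps" using e0 lm by (simp add: eps_def)
    have eps1: "eps < 1"
    proof -
      have "1 \<le> (ln mu) powr p" using lm p by (intro ge_one_powr_ge_zero) auto
      moreover have "eta powr p < 1" using ep x0 p by simp
      ultimately show ?thesis unfolding eps_def by (simp add: divide_less_eq)
    qed
    have mu1: "1 < mu" using G(4) by (simp add: mu_def)
    note LB = lower_bound[OF q p e0 mu1 eps_def eps0 eps1]
    have ne: "Bt2 q ` Gclass p eta \<noteq> {}" using LB(1) by auto
    have "Lx x = eta powr p * (ln mu) powr (2 - p) * (1 - exp (- ln ((1 / q - 1) / eps) / mu))"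
      by (simp add: Lx_def ep eps_def mu_def)
    also have "\<dots> \<le> Bt2 q (twopt eps mu)" by (rule LB(2))
    also have "\<dots> \<le> f eta" unfolding f_def using bdd LB(1) by (intro cSup_upper) auto
    finally have L: "Lx x \<le> f eta" .
    have U: "f eta \<le> Ux x" unfolding f_def using ne ub by (intro cSup_least) auto
    show "bdd_above (Bt2 q ` Gclass p eta)
      \<and> Lx (ln (1 / eta)) \<le> f eta \<and> f eta \<le> Ux (ln (1 / eta))
      \<and> g eta = gx (ln (1 / eta)) \<and> 0 < gx (ln (1 / eta))"
      using bdd L U geq gpos by (simp add: x_def)
  qed
  have part1: "\<forall>\<^sub>F eta in at_right 0. bdd_above (Bt2 q ` Gclass p eta)"
    using main by (rule eventually_mono) simp
  have "((\<lambda>eta. f eta / g eta) \<longlongrightarrow> 1) (at_right 0)"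
  proof (rule tendsto_sandwich[OF _ _ limL limU])
    show "eventually (\<lambda>eta. Lx (ln (1 / eta)) / gx (ln (1 / eta)) \<le> f eta / g eta) (at_right 0)"
      using main by (rule eventually_mono) (auto intro: divide_right_mono)
    show "eventually (\<lambda>eta. f eta / g eta \<le> Ux (ln (1 / eta)) / gx (ln (1 / eta))) (at_right 0)"
      using main by (rule eventually_mono) (auto intro: divide_right_mono)
  qed
  then have "f \<sim>[at_right 0] g" by (rule asymp_equivI')
  then show ?thesis using part1 by (simp add: f_def g_def)
qed

end
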